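(* Consider the setting described in the context, with value functions $U^o_t$, $t=0,\dots,T$. For every bound $B>0$ there exists a constant $K>0$ such that for all $t=0,\dots,T$ and all symmetric positive semidefinite $P,Q\in\mathbb{R}^{n\times n}$ with $\|P\|_F\le B$ and $\|Q\|_F\le B$, $$|U^o_t(P)-U^o_t(Q)|\le K\|P-Q\|_F.$$
   Context: Fix $T\in\mathbb{N}$, matrices $A_0,\dots,A_T\in\mathbb{R}^{n\times n}$, a symmetric positive definite $\mathcal W\in\mathbb{R}^{n\times n}$, and $N$ sensors: for $i\in\{1,\dots,N\}$ and $t=0,\dots,T$, matrices $C^i_t\in\mathbb{R}^{m_i\times n}$ and symmetric positive definite $\mathcal V^i\in\mathbb{R}^{m_i\times m_i}$. Let $R^i_t={C^i_t}^{\mathsf T}(\mathcal V^i)^{-1}C^i_t$ and $h_t(M)=A_{t-1}MA_{t-1}^{\mathsf T}+\mathcal W$. For a symmetric positive semidefinite $M$ and a positive semidefinite $R$ define the measurement update $\Phi(R,M)=M(I+RM)^{-1}$ (which equals $(M^{-1}+R)^{-1}$ when $M$ is invertible). For a relaxed schedule $\theta=\{\theta_k\}_{k=t}^T$ with each $\theta_k=(\theta^1_k,\dots,\theta^N_k)$ in the probability simplex ($\theta^i_k\in[0,1]$, $\sum_i\theta^i_k=1$), and initial prediction covariance $P_{t|t-1}=P$, define recursively $P_k=\Phi\big(\sum_{i=1}^N\theta^i_kR^i_k,\,P_{k|k-1}\big)$ and $P_{k+1|k}=h_{k+1}(P_k)$ for $k=t,\dots,T$. The relaxed value function is $U^o_t(P)=\min_{\theta}\sum_{k=t}^T\mathrm{tr}(P_k)$,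 the minimum over all such relaxed schedules from time $t$ to $T$. $\|\cdot\|_F$ is the Frobenius norm. *)

theory Defs
  imports "Jordan_Normal_Form.Matrix"
begin

text \<open>Matrices are Jordan_Normal_Form matrices (real mat), whose dimensions
are values, so that sensors may have different output dimensions m_i.\<close>

definition mtrace :: "real mat \<Rightarrow> real" where
  "mtrace M = (\<Sum>i<dim_row M. M $$ (i, i))"

definition frob_norm :: "real mat \<Rightarrow> real" where
  "frob_norm M = sqrt (\<Sum>i<dim_row M. \<Sum>j<dim_col M. (M $$ (i, j))\<^sup>2)"

definition sym_mat :: "real mat \<Rightarrow> bool" where
  "sym_mat M \<longleftrightarrow> transpose_mat M = M"

definition psd_mat :: "nat \<Rightarrow> real mat \<Rightarrow> bool" where
  "psd_mat n M \<longleftrightarrow> M \<in> carrier_mat n n \<and> sym_mat M \<and>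
     (\<forall>v \<in> carrier_vec n. v \<bullet> (M *\<^sub>v v) \<ge> 0)"

definition pd_mat :: "nat \<Rightarrow> real mat \<Rightarrow> bool" where
  "pd_mat n M \<longleftrightarrow> M \<in> carrier_mat n n \<and> sym_mat M \<and>
     (\<forall>v \<in> carrier_vec n. v \<noteq> 0\<^sub>v n \<longrightarrow> v \<bullet> (M *\<^sub>v v) > 0)"

definition minv :: "real mat \<Rightarrow> real mat" where
  "minv M = (SOME B. B \<in> carrier_mat (dim_row M) (dim_row M) \<and>
       M * B = 1\<^sub>m (dim_row M) \<and> B * M = 1\<^sub>m (dim_row M))"

definition info_mat :: "real mat \<Rightarrow> real mat \<Rightarrow> real mat" where
  "info_mat C V = transpose_mat C * minv V * C"

definition Phi :: "real mat \<Rightarrow> real mat \<Rightarrow> real mat" where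
  "Phi R M = M * minv (1\<^sub>m (dim_row M) + R * M)"

definition hpred :: "real mat \<Rightarrow> real mat \<Rightarrow> real mat \<Rightarrow> real mat" where
  "hpred Ak W M = Ak * M * transpose_mat Ak + W"

text \<open>Relaxed schedules from time t to T over sensors 1..N:
  theta k i is theta^i_k; only values for k in {t..T}, i in {1..N} matter.\<close>
definition relaxed_schedules :: "nat \<Rightarrow> nat \<Rightarrow> nat \<Rightarrow> (nat \<Rightarrow> nat \<Rightarrow> real) set" where
  "relaxed_schedules N t T = {\<theta>. \<forall>k\<in>{t..T}.
      (\<forall>i\<in>{1..N}. 0 \<le> \<theta> k i \<and> \<theta> k i \<le> 1) \<and> (\<Sum>i=1..N. \<theta> k i) = 1}"

definition wsum :: "nat \<Rightarrow> nat \<Rightarrow> (nat \<Rightarrow> nat \<Rightarrow> real mat) \<Rightarrow> (nat \<Rightarrow> nat \<Rightarrow> real) \<Rightarrow> nat \<Rightarrow> real mat" where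
  "wsum n N R \<theta> k = foldr (\<lambda>i M. \<theta> k i \<cdot>\<^sub>m R i k + M) [1..<Suc N] (0\<^sub>m n n)"

text \<open>Cost sum_{j=k}^{k+d} tr(P_j) with prediction covariance P_{k|k-1} = P.
  R i j is the matrix R^i_j.\<close>
fun relaxed_cost :: "(nat \<Rightarrow> real mat) \<Rightarrow> real mat \<Rightarrow> nat \<Rightarrow> (nat \<Rightarrow> nat \<Rightarrow> real mat)
     \<Rightarrow> (nat \<Rightarrow> nat \<Rightarrow> real) \<Rightarrow> nat \<Rightarrow> nat \<Rightarrow> real mat \<Rightarrow> real" where
  "relaxed_cost A W N R \<theta> 0 k P =
     mtrace (Phi (wsum (dim_row P) N R \<theta> k) P)"
| "relaxed_cost A W N R \<theta> (Suc d) k P =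
     (let Pk = Phi (wsum (dim_row P) N R \<theta> k) P
      in mtrace Pk + relaxed_cost A W N R \<theta> d (Suc k) (hpred (A k) W Pk))"

definition U_relaxed :: "(nat \<Rightarrow> real mat) \<Rightarrow> real mat \<Rightarrow> nat \<Rightarrow> (nat \<Rightarrow> nat \<Rightarrow> real mat)
     \<Rightarrow> nat \<Rightarrow> nat \<Rightarrow> real mat \<Rightarrow> real" where
  "U_relaxed A W N R T t P =
     (INF \<theta> \<in> relaxed_schedules N t T. relaxed_cost A W N R \<theta> (T - t) t P)"

end

theory Submission
  imports Defs "Jordan_Normal_Form.Determinant"
begin

lemma sprod_self_zero:
  fixes v :: "real vec"
  assumes v: "v \<in> carrier_vec n" and z: "v \<bullet> v = 0"
  shows "v = 0\<^sub>v n"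
proof -
  have "(\<Sum>i\<in>{0..<n}. v $ i * v $ i) = 0" using z v unfolding scalar_prod_def by auto
  then have "\<forall>i\<in>{0..<n}. v $ i * v $ i = 0"
    by (subst sum_nonneg_eq_0_iff[symmetric]) auto
  then show ?thesis using v by (intro eq_vecI) auto
qed

lemma sym_bil:
  fixes M :: "real mat"
  assumes M: "M \<in> carrier_mat n n" and s: "sym_mat M"
    and u: "u \<in> carrier_vec n" and v: "v \<in> carrier_vec n"
  shows "u \<bullet> (M *\<^sub>v v) = v \<bullet> (M *\<^sub>v u)"
proof -
  have "(transpose_mat M *\<^sub>v u) \<bullet> v = u \<bullet> (M *\<^sub>v v)"
    by (rule transpose_vec_mult_scalar[OF M v u])
  then have "(M *\<^sub>v u) \<bullet> v = u \<bullet> (M *\<^sub>v v)" using s unfolding sym_mat_def by simp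
  then show ?thesis using comm_scalar_prod[of "M *\<^sub>v u" n v] M u v by simp
qed

lemma qf_shift:
  fixes M :: "real mat"
  assumes M: "M \<in> carrier_mat n n" and s: "sym_mat M"
    and u: "u \<in> carrier_vec n" and v: "v \<in> carrier_vec n"
  shows "(v + c \<cdot>\<^sub>v u) \<bullet> (M *\<^sub>v (v + c \<cdot>\<^sub>v u))
     = v \<bullet> (M *\<^sub>v v) + 2 * c * (u \<bullet> (M *\<^sub>v v)) + c * c * (u \<bullet> (M *\<^sub>v u))"
proof -
  have e1: "M *\<^sub>v (v + c \<cdot>\<^sub>v u) = M *\<^sub>v v + c \<cdot>\<^sub>v (M *\<^sub>v u)"
    using M u v by (simp add: mult_add_distrib_mat_vec mult_mat_vec)
  have "(v + c \<cdot>\<^sub>v u) \<bullet> (M *\<^sub>v v + c \<cdot>\<^sub>v (M *\<^sub>v u))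
     = v \<bullet> (M *\<^sub>v v) + c * (v \<bullet> (M *\<^sub>v u)) + c * (u \<bullet> (M *\<^sub>v v)) + c * c * (u \<bullet> (M *\<^sub>v u))"
    using M u v
    by (simp add: add_scalar_prod_distrib[of _ n] scalar_prod_add_distrib[of _ n] algebra_simps)
  then show ?thesis unfolding e1 using sym_bil[OF M s u v] by simp
qed

lemma psd_qf_zero:
  assumes P: "psd_mat n M" and v: "v \<in> carrier_vec n" and z: "v \<bullet> (M *\<^sub>v v) = 0"
  shows "M *\<^sub>v v = 0\<^sub>v n"
proof -
  have M: "M \<in> carrier_mat n n" and s: "sym_mat M"
    and nn: "\<And>w. w \<in> carrier_vec n \<Longrightarrow> w \<bullet> (M *\<^sub>v w) \<ge> 0" using P unfolding psd_mat_def by auto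
  have key: "u \<bullet> (M *\<^sub>v v) = 0" if u: "u \<in> carrier_vec n" for u
  proof -
    define a where "a = u \<bullet> (M *\<^sub>v u)"
    define c where "c = u \<bullet> (M *\<^sub>v v)"
    have a0: "a \<ge> 0" using nn[OF u] a_def by simp
    define s where "s = - c / (a + 1)"
    have "0 \<le> (v + s \<cdot>\<^sub>v u) \<bullet> (M *\<^sub>v (v + s \<cdot>\<^sub>v u))" using nn u v by simp
    also have "\<dots> = 2 * s * c + s * s * a" using qf_shift[OF M s u v, of s] z a_def c_def by simp
    finally have h: "0 \<le> 2 * s * c + s * s * a" .
    have sa: "s * (a + 1) = - c" unfolding s_def using a0 by simp
    have "(a+1)*(a+1)*(2 * s * c + s * s * a) = 2*c*(a+1)*(s*(a+1)) + a*(s*(a+1))*(s*(a+1))"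
      by (simp add: algebra_simps)
    also have "\<dots> = c * c * (- a - 2)" unfolding sa by (simp add: algebra_simps)
    finally have e: "(a+1)*(a+1)*(2 * s * c + s * s * a) = c * c * (- a - 2)" .
    have "0 \<le> (a+1)*(a+1)*(2 * s * c + s * s * a)" using h a0 by simp
    then have "c * c * (- a - 2) \<ge> 0" using e by simp
    then have "(c * c) * (a + 2) \<le> 0" by (simp add: algebra_simps)
    then have "c * c \<le> 0" using a0 by (simp add: mult_le_0_iff)
    then have "c = 0" by (auto simp add: mult_le_0_iff)
    then show ?thesis using c_def by simp
  qed
  have "(M *\<^sub>v v) \<bullet> (M *\<^sub>v v) = 0" using key[of "M *\<^sub>v v"] M v by simp
  then show ?thesis using sprod_self_zero[of "M *\<^sub>v v" n] M v by simp
qed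

lemma inj_imp_inverse:
  fixes M :: "real mat"
  assumes M: "M \<in> carrier_mat n n"
    and inj: "\<And>v. v \<in> carrier_vec n \<Longrightarrow> M *\<^sub>v v = 0\<^sub>v n \<Longrightarrow> v = 0\<^sub>v n"
  shows "\<exists>X \<in> carrier_mat n n. M * X = 1\<^sub>m n \<and> X * M = 1\<^sub>m n"
proof -
  have "det M \<noteq> 0" using det_0_iff_vec_prod_zero_field[OF M] inj by auto
  from det_non_zero_imp_unit[OF M this, of "()"] show ?thesis
    unfolding Units_def ring_mat_def by auto
qed

lemma minv_eq:
  fixes M X :: "real mat"
  assumes M: "M \<in> carrier_mat n n" and X: "X \<in> carrier_mat n n"
    and MX: "M * X = 1\<^sub>m n" and XM: "X * M = 1\<^sub>m n"
  shows "minv M = X"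
proof -
  have dr: "dim_row M = n" using M by auto
  have ex: "\<exists>B. B \<in> carrier_mat n n \<and> M * B = 1\<^sub>m n \<and> B * M = 1\<^sub>m n" using X MX XM by auto
  define B where "B = minv M"
  have B: "B \<in> carrier_mat n n" "M * B = 1\<^sub>m n" "B * M = 1\<^sub>m n"
    using someI_ex[OF ex] unfolding B_def minv_def dr by auto
  have "B = B * (M * X)" unfolding MX using B by (simp add: right_mult_one_mat)
  also have "\<dots> = (B * M) * X" by (rule assoc_mult_mat[symmetric, OF B(1) M X])
  also have "\<dots> = X" using B X XM by simp
  finally show ?thesis using B_def by simp
qed

lemma minv_props:
  fixes M :: "real mat"
  assumes M: "M \<in> carrier_mat n n"
    and ex: "\<exists>X \<in> carrier_mat n n. M * X = 1\<^sub>m n \<and> X * M = 1\<^sub>m n"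
  shows "minv M \<in> carrier_mat n n" "M * minv M = 1\<^sub>m n" "minv M * M = 1\<^sub>m n"
proof -
  obtain X where "X \<in> carrier_mat n n" "M * X = 1\<^sub>m n" "X * M = 1\<^sub>m n" using ex by auto
  with minv_eq[OF M this] show "minv M \<in> carrier_mat n n" "M * minv M = 1\<^sub>m n" "minv M * M = 1\<^sub>m n"
    by auto
qed

definition l1 :: "real mat \<Rightarrow> real" where
  "l1 M = (\<Sum>i<dim_row M. \<Sum>j<dim_col M. \<bar>M $$ (i, j)\<bar>)"

lemma l1_nonneg: "l1 M \<ge> 0"
  unfolding l1_def by (intro sum_nonneg) auto

lemma l1_entry: assumes "i < dim_row M" "j < dim_col M" shows "\<bar>M $$ (i,j)\<bar> \<le> l1 M"
proof -
  have "\<bar>M $$ (i,j)\<bar> \<le> (\<Sum>j<dim_col M. \<bar>M $$ (i, j)\<bar>)"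
    by (rule member_le_sum[where f="\<lambda>j. \<bar>M $$ (i, j)\<bar>"]) (use assms in auto)
  also have "\<dots> \<le> l1 M" unfolding l1_def
    by (rule member_le_sum[where f="\<lambda>i. \<Sum>j<dim_col M. \<bar>M $$ (i, j)\<bar>"]) (use assms in \<open>auto intro: sum_nonneg\<close>)
  finally show ?thesis .
qed

lemma l1_add: assumes "A \<in> carrier_mat r c" "B \<in> carrier_mat r c"
  shows "l1 (A + B) \<le> l1 A + l1 B"
proof -
  have "l1 (A + B) = (\<Sum>i<r. \<Sum>j<c. \<bar>A $$ (i, j) + B $$ (i,j)\<bar>)"
    unfolding l1_def using assms by (intro sum.cong) auto
  also have "\<dots> \<le> (\<Sum>i<r. \<Sum>j<c. \<bar>A $$ (i, j)\<bar> + \<bar>B $$ (i,j)\<bar>)"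
    by (intro sum_mono abs_triangle_ineq)
  also have "\<dots> = l1 A + l1 B" unfolding l1_def using assms by (simp add: sum.distrib)
  finally show ?thesis .
qed

lemma l1_minus: assumes "A \<in> carrier_mat r c" "B \<in> carrier_mat r c"
  shows "l1 (A - B) \<le> l1 A + l1 B"
proof -
  have "l1 (A - B) = (\<Sum>i<r. \<Sum>j<c. \<bar>A $$ (i, j) - B $$ (i,j)\<bar>)"
    unfolding l1_def using assms by (intro sum.cong) auto
  also have "\<dots> \<le> (\<Sum>i<r. \<Sum>j<c. \<bar>A $$ (i, j)\<bar> + \<bar>B $$ (i,j)\<bar>)"
    by (intro sum_mono abs_triangle_ineq4)
  also have "\<dots> = l1 A + l1 B" unfolding l1_def using assms by (simp add: sum.distrib)
  finally show ?thesis .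
qed

lemma l1_smult: "l1 (c \<cdot>\<^sub>m A) = \<bar>c\<bar> * l1 A"
  unfolding l1_def by (simp add: sum_distrib_left abs_mult)

lemma l1_one: "l1 (1\<^sub>m n) = real n"
proof -
  have "l1 (1\<^sub>m n) = (\<Sum>i<n. \<Sum>j<n. if i = j then 1 else 0)"
    unfolding l1_def by (intro sum.cong) auto
  also have "\<dots> = (\<Sum>i<n. 1)" by (intro sum.cong) auto
  finally show ?thesis by simp
qed

lemma l1_zero: "l1 (0\<^sub>m r c) = 0"
  unfolding l1_def by simp

lemma l1_transpose: "l1 (transpose_mat A) = l1 A"
  unfolding l1_def by (simp add: sum.swap[of _ "{..<dim_col A}"])

lemma l1_mult: assumes A: "A \<in> carrier_mat a b" and B: "B \<in> carrier_mat b c"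
  shows "l1 (A * B) \<le> l1 A * l1 B"
proof -
  have "l1 (A * B) = (\<Sum>i<a. \<Sum>k<c. \<bar>\<Sum>j<b. A $$ (i,j) * B $$ (j,k)\<bar>)"
    unfolding l1_def using A B
    by (intro sum.cong refl) (auto simp: scalar_prod_def lessThan_atLeast0 intro!: arg_cong[where f=abs] sum.cong)
  also have "\<dots> \<le> (\<Sum>i<a. \<Sum>k<c. \<Sum>j<b. \<bar>A $$ (i,j)\<bar> * \<bar>B $$ (j,k)\<bar>)"
    by (intro sum_mono order.trans[OF sum_abs]) (simp add: abs_mult)
  also have "\<dots> = (\<Sum>i<a. \<Sum>j<b. \<bar>A $$ (i,j)\<bar> * (\<Sum>k<c. \<bar>B $$ (j,k)\<bar>))"
    unfolding sum_distrib_left by (rule sum.cong[OF refl], rule sum.swap)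
  also have "\<dots> \<le> (\<Sum>i<a. \<Sum>j<b. \<bar>A $$ (i,j)\<bar> * l1 B)"
  proof (intro sum_mono mult_left_mono)
    fix j assume j: "j \<in> {..<b}"
    have "(\<Sum>k<c. \<bar>B $$ (j,k)\<bar>) \<le> (\<Sum>i<b. \<Sum>k<c. \<bar>B $$ (i,k)\<bar>)"
      by (rule member_le_sum[where f="\<lambda>i. \<Sum>k<c. \<bar>B $$ (i,k)\<bar>"]) (use j in \<open>auto intro: sum_nonneg\<close>)
    then show "(\<Sum>k<c. \<bar>B $$ (j,k)\<bar>) \<le> l1 B" using B by (simp add: l1_def)
  qed auto
  also have "\<dots> = l1 A * l1 B" unfolding l1_def using A by (simp add: sum_distrib_right)
  finally show ?thesis .
qed

lemma mtrace_minus: assumes "A \<in> carrier_mat n n" "B \<in> carrier_mat n n"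
  shows "mtrace (A - B) = mtrace A - mtrace B"
  unfolding mtrace_def using assms by (simp add: sum_subtractf)

lemma mtrace_le_l1: "\<bar>mtrace A\<bar> \<le> l1 A" if "A \<in> carrier_mat n n"
proof -
  have "\<bar>mtrace A\<bar> \<le> (\<Sum>i<n. \<bar>A $$ (i,i)\<bar>)" unfolding mtrace_def using that by (simp add: sum_abs)
  also have "\<dots> \<le> (\<Sum>i<n. \<Sum>j<n. \<bar>A $$ (i,j)\<bar>)"
    by (intro sum_mono member_le_sum[where f="\<lambda>j. \<bar>A $$ (_, j)\<bar>", simplified]) auto
  finally show ?thesis unfolding l1_def using that by simp
qed

lemma psd_carrier: "psd_mat n M \<Longrightarrow> M \<in> carrier_mat n n" unfolding psd_mat_def by auto
lemma psd_sym: "psd_mat n M \<Longrightarrow> sym_mat M" unfolding psd_mat_def by auto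
lemma psd_nn: "psd_mat n M \<Longrightarrow> v \<in> carrier_vec n \<Longrightarrow> v \<bullet> (M *\<^sub>v v) \<ge> 0" unfolding psd_mat_def by auto
lemma psd_index_sym: "psd_mat n M \<Longrightarrow> i < n \<Longrightarrow> j < n \<Longrightarrow> M $$ (i,j) = M $$ (j,i)"
  unfolding psd_mat_def sym_mat_def by (metis carrier_matD index_transpose_mat(1))

lemma pd_psd: "pd_mat n M \<Longrightarrow> psd_mat n M"
  unfolding pd_mat_def psd_mat_def
proof (intro conjI ballI; (elim conjE)?)
  fix v :: "real vec" assume M: "M \<in> carrier_mat n n" and v: "v \<in> carrier_vec n"
    and h: "\<forall>v\<in>carrier_vec n. v \<noteq> 0\<^sub>v n \<longrightarrow> 0 < v \<bullet> (M *\<^sub>v v)"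
  show "0 \<le> v \<bullet> (M *\<^sub>v v)"
  proof (cases "v = 0\<^sub>v n")
    case True then show ?thesis using M by simp
  next
    case False then show ?thesis using h v by fastforce
  qed
qed auto

lemma unit_qf: fixes M :: "real mat" assumes M: "M \<in> carrier_mat n n" and i: "i < n" and j: "j < n"
  shows "unit_vec n j \<bullet> (M *\<^sub>v unit_vec n i) = M $$ (j, i)"
proof -
  have "unit_vec n j \<bullet> (M *\<^sub>v unit_vec n i) = (M *\<^sub>v unit_vec n i) $ j"
    using scalar_prod_left_unit[of "M *\<^sub>v unit_vec n i" n j] M j by simp
  also have "\<dots> = row M j \<bullet> unit_vec n i" using M j by simp
  also have "\<dots> = M $$ (j,i)" using M i j by simp
  finally show ?thesis .
qed

lemma zero_mat_vec: "v \<in> carrier_vec n \<Longrightarrow> 0\<^sub>m m n *\<^sub>v v = 0\<^sub>v m"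
  by (intro eq_vecI) (auto simp: scalar_prod_def row_def)

lemma transpose_smult': "transpose_mat (c \<cdot>\<^sub>m A) = c \<cdot>\<^sub>m transpose_mat A"
  by (intro eq_matI) auto

lemma psd_diag: assumes P: "psd_mat n M" and i: "i < n" shows "M $$ (i,i) \<ge> 0"
  using psd_nn[OF P, of "unit_vec n i"] unit_qf[OF psd_carrier[OF P] i i] by simp

lemma psd_entry: assumes P: "psd_mat n M" and i: "i < n" and j: "j < n"
  shows "\<bar>M $$ (i,j)\<bar> \<le> (M $$ (i,i) + M $$ (j,j)) / 2"
proof -
  have M: "M \<in> carrier_mat n n" and s: "sym_mat M" using P psd_carrier psd_sym by auto
  have f: "M $$ (i,i) + 2 * c * M $$ (j,i) + c * c * M $$ (j,j) \<ge> 0" for c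
  proof -
    have "0 \<le> (unit_vec n i + c \<cdot>\<^sub>v unit_vec n j) \<bullet> (M *\<^sub>v (unit_vec n i + c \<cdot>\<^sub>v unit_vec n j))"
      by (rule psd_nn[OF P]) simp
    also have "\<dots> = M $$ (i,i) + 2 * c * M $$ (j,i) + c * c * M $$ (j,j)"
      by (subst qf_shift[OF M s]) (use M i j in auto)
    finally show ?thesis .
  qed
  have "M $$ (j,i) = M $$ (i,j)" using psd_index_sym[OF P j i] .
  with f[of 1] f[of "-1"] show ?thesis by auto
qed

lemma psd_trace_nonneg: assumes P: "psd_mat n M" shows "mtrace M \<ge> 0"
  unfolding mtrace_def using psd_carrier[OF P] psd_diag[OF P] by (auto intro: sum_nonneg)

lemma psd_l1_trace: assumes P: "psd_mat n M" shows "l1 M \<le> real n * mtrace M"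
proof -
  have M: "M \<in> carrier_mat n n" using psd_carrier[OF P] .
  have "l1 M = (\<Sum>i<n. \<Sum>j<n. \<bar>M $$ (i,j)\<bar>)" unfolding l1_def using M by simp
  also have "\<dots> \<le> (\<Sum>i<n. \<Sum>j<n. (M $$ (i,i) + M $$ (j,j)) / 2)"
    by (intro sum_mono psd_entry[OF P]) auto
  also have "\<dots> = (\<Sum>i<n. \<Sum>j<n. M $$ (i,i) / 2) + (\<Sum>i<n. \<Sum>j<n. M $$ (j,j) / 2)"
    by (simp add: add_divide_distrib sum.distrib)
  also have "\<dots> = real n * mtrace M" unfolding mtrace_def using M
    by (simp add: sum_divide_distrib[symmetric] sum_distrib_left[symmetric] algebra_simps)
  finally show ?thesis .
qed

lemma trace_le_l1_psd: "psd_mat n M \<Longrightarrow> mtrace M \<le> l1 M"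
  using mtrace_le_l1[OF psd_carrier] by fastforce

lemma smult_mat_vec: assumes "M \<in> carrier_mat n n" "v \<in> carrier_vec n"
  shows "(c \<cdot>\<^sub>m M) *\<^sub>v v = c \<cdot>\<^sub>v (M *\<^sub>v v)"
  using assms by (intro eq_vecI) (auto simp: row_def scalar_prod_def sum_distrib_left ac_simps)

lemma psd_zero: "psd_mat n (0\<^sub>m n n)"
  unfolding psd_mat_def sym_mat_def by (auto simp: zero_mat_vec)

lemma psd_add: assumes "psd_mat n A" "psd_mat n B" shows "psd_mat n (A + B)"
  using assms unfolding psd_mat_def sym_mat_def
  by (auto simp: transpose_add add_mult_distrib_mat_vec scalar_prod_add_distrib[of _ n])

lemma psd_smult: assumes "psd_mat n A" "c \<ge> 0" shows "psd_mat n (c \<cdot>\<^sub>m A)"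
  using assms unfolding psd_mat_def sym_mat_def
  by (auto simp: smult_mat_vec transpose_smult')

lemma psd_congr: assumes P: "psd_mat n P" and A: "A \<in> carrier_mat n n"
  shows "psd_mat n (A * P * transpose_mat A)"
proof -
  have Pc: "P \<in> carrier_mat n n" using psd_carrier[OF P] .
  have "transpose_mat (A * P * transpose_mat A) = A * P * transpose_mat A"
  proof -
    have Ps: "transpose_mat P = P" using psd_sym[OF P] unfolding sym_mat_def .
    have "transpose_mat (A * P * transpose_mat A) = transpose_mat (transpose_mat A) * transpose_mat (A * P)"
      by (rule transpose_mult[of _ n n]) (use A Pc in auto)
    also have "transpose_mat (A * P) = transpose_mat P * transpose_mat A"
      by (rule transpose_mult[of _ n n]) (use A Pc in auto)
    finally show ?thesis using A Pc Ps by simp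
  qed
  moreover have "v \<bullet> ((A * P * transpose_mat A) *\<^sub>v v) \<ge> 0" if v: "v \<in> carrier_vec n" for v
  proof -
    let ?w = "transpose_mat A *\<^sub>v v"
    have w: "?w \<in> carrier_vec n" using A v by simp
    have "(A * P * transpose_mat A) *\<^sub>v v = (A * P) *\<^sub>v ?w"
      by (rule assoc_mult_mat_vec) (use A Pc v in auto)
    also have "\<dots> = A *\<^sub>v (P *\<^sub>v ?w)"
      by (rule assoc_mult_mat_vec) (use A Pc w in auto)
    finally have "v \<bullet> ((A * P * transpose_mat A) *\<^sub>v v) = v \<bullet> (A *\<^sub>v (P *\<^sub>v ?w))" by simp
    also have "\<dots> = ?w \<bullet> (P *\<^sub>v ?w)"
      using transpose_vec_mult_scalar[OF A, of "P *\<^sub>v ?w" v] Pc w v by simp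
    finally show ?thesis using psd_nn[OF P w] by simp
  qed
  ultimately show ?thesis unfolding psd_mat_def sym_mat_def using A Pc by auto
qed

lemma hpred_psd: assumes P: "psd_mat n P" and A: "A \<in> carrier_mat n n" and W: "psd_mat n W"
  shows "psd_mat n (hpred A W P)"
  unfolding hpred_def by (rule psd_add[OF psd_congr[OF P A] W])

lemma mat_vec_zero: "(A :: real mat) \<in> carrier_mat k n \<Longrightarrow> A *\<^sub>v 0\<^sub>v n = 0\<^sub>v k"
  by (intro eq_vecI) auto

lemma E_decomp:
  fixes R P :: "real mat"
  assumes Rc: "R \<in> carrier_mat n n" and Pc: "P \<in> carrier_mat n n" and w: "w \<in> carrier_vec n"
  shows "(1\<^sub>m n + R * P) *\<^sub>v w = w + R *\<^sub>v (P *\<^sub>v w)"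
proof -
  have "(1\<^sub>m n + R * P) *\<^sub>v w = 1\<^sub>m n *\<^sub>v w + (R * P) *\<^sub>v w"
    by (rule add_mult_distrib_mat_vec) (use Rc Pc w in auto)
  also have "\<dots> = w + R *\<^sub>v (P *\<^sub>v w)" using Rc Pc w by simp
  finally show ?thesis .
qed

lemma E_inj:
  assumes R: "psd_mat n R" and P: "psd_mat n P" and w: "w \<in> carrier_vec n"
    and z: "(1\<^sub>m n + R * P) *\<^sub>v w = 0\<^sub>v n"
  shows "w = 0\<^sub>v n"
proof -
  have Rc: "R \<in> carrier_mat n n" and Pc: "P \<in> carrier_mat n n" using R P psd_carrier by auto
  define p where "p = P *\<^sub>v w"
  define x where "x = R *\<^sub>v p"
  have pc: "p \<in> carrier_vec n" "x \<in> carrier_vec n" using Rc Pc w unfolding p_def x_def by simp_all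
  have wx: "w + x = 0\<^sub>v n" using z E_decomp[OF Rc Pc w] unfolding x_def p_def by simp
  have "w \<bullet> p + x \<bullet> p = (w + x) \<bullet> p" by (rule add_scalar_prod_distrib[symmetric]) (use w pc in auto)
  also have "\<dots> = 0" unfolding wx using pc by simp
  finally have s0: "w \<bullet> p + x \<bullet> p = 0" .
  have a: "w \<bullet> p \<ge> 0" using psd_nn[OF P w] p_def by simp
  have "x \<bullet> p = p \<bullet> x" by (rule comm_scalar_prod) (use pc in auto)
  then have b: "x \<bullet> p \<ge> 0" using psd_nn[OF R pc(1)] x_def by simp
  have "w \<bullet> (P *\<^sub>v w) = 0" using a b s0 p_def by simp
  then have "p = 0\<^sub>v n" using psd_qf_zero[OF P w] p_def by simp
  then have "x = 0\<^sub>v n" unfolding x_def using mat_vec_zero[OF Rc] by simp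
  then show ?thesis using wx w by simp
qed

lemma E_inv:
  assumes R: "psd_mat n R" and P: "psd_mat n P"
  shows "minv (1\<^sub>m n + R * P) \<in> carrier_mat n n"
    "(1\<^sub>m n + R * P) * minv (1\<^sub>m n + R * P) = 1\<^sub>m n"
    "minv (1\<^sub>m n + R * P) * (1\<^sub>m n + R * P) = 1\<^sub>m n"
proof -
  have Rc: "R \<in> carrier_mat n n" and Pc: "P \<in> carrier_mat n n" using R P psd_carrier by auto
  have Ec: "1\<^sub>m n + R * P \<in> carrier_mat n n" using Rc Pc by simp
  have ex: "\<exists>X\<in>carrier_mat n n. (1\<^sub>m n + R * P) * X = 1\<^sub>m n \<and> X * (1\<^sub>m n + R * P) = 1\<^sub>m n"
    by (rule inj_imp_inverse[OF Ec]) (rule E_inj[OF R P], auto)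
  from minv_props[OF Ec ex] show "minv (1\<^sub>m n + R * P) \<in> carrier_mat n n"
    "(1\<^sub>m n + R * P) * minv (1\<^sub>m n + R * P) = 1\<^sub>m n"
    "minv (1\<^sub>m n + R * P) * (1\<^sub>m n + R * P) = 1\<^sub>m n" by auto
qed

lemma Phi_eq: "psd_mat n P \<Longrightarrow> Phi R P = P * minv (1\<^sub>m n + R * P)"
  unfolding Phi_def using psd_carrier by fastforce

lemma XtP:
  assumes R: "psd_mat n R" and P: "psd_mat n P"
  shows "transpose_mat (minv (1\<^sub>m n + R * P)) * P = P * minv (1\<^sub>m n + R * P)"
proof -
  have Rc: "R \<in> carrier_mat n n" and Pc: "P \<in> carrier_mat n n" using R P psd_carrier by auto
  have Rs: "transpose_mat R = R" and Ps: "transpose_mat P = P"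
    using R P psd_sym unfolding sym_mat_def by auto
  define E where "E = 1\<^sub>m n + R * P"
  define X where "X = minv E"
  have Ec: "E \<in> carrier_mat n n" unfolding E_def using Rc Pc by simp
  have X: "X \<in> carrier_mat n n" "E * X = 1\<^sub>m n" "X * E = 1\<^sub>m n"
    using E_inv[OF R P] unfolding X_def E_def by auto
  define F where "F = transpose_mat E"
  have Fc: "F \<in> carrier_mat n n" unfolding F_def using Ec by simp
  have Xt: "transpose_mat X \<in> carrier_mat n n" using X by simp
  have F: "F = 1\<^sub>m n + P * R"
  proof -
    have "F = transpose_mat (1\<^sub>m n) + transpose_mat (R * P)"
      unfolding F_def E_def by (rule transpose_add) (use Rc Pc in auto)
    also have "transpose_mat (R * P) = transpose_mat P * transpose_mat R"
      by (rule transpose_mult) (use Rc Pc in auto)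
    finally show ?thesis using Rs Ps by simp
  qed
  have XtF: "transpose_mat X * F = 1\<^sub>m n"
  proof -
    have "transpose_mat (E * X) = transpose_mat X * transpose_mat E"
      by (rule transpose_mult) (use Ec X in auto)
    then show ?thesis using X(2) unfolding F_def by simp
  qed
  have PE: "P * E = F * P"
  proof -
    have "P * E = P * 1\<^sub>m n + P * (R * P)" unfolding E_def
      by (rule mult_add_distrib_mat) (use Rc Pc in auto)
    also have "\<dots> = P + P * (R * P)" using Pc by (simp add: right_mult_one_mat)
    finally have 1: "P * E = P + P * (R * P)" .
    have "F * P = 1\<^sub>m n * P + (P * R) * P" unfolding F
      by (rule add_mult_distrib_mat) (use Rc Pc in auto)
    also have "\<dots> = P + P * (R * P)" using Pc Rc by (simp add: left_mult_one_mat)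
    finally show ?thesis using 1 by simp
  qed
  have "transpose_mat X * P = transpose_mat X * P * (E * X)" using X(2) Xt Pc
    by (simp add: right_mult_one_mat)
  also have "\<dots> = transpose_mat X * ((P * E) * X)"
    using assoc_mult_mat[OF Xt Pc mult_carrier_mat[OF Ec X(1)]] assoc_mult_mat[OF Pc Ec X(1)] by simp
  also have "\<dots> = transpose_mat X * ((F * P) * X)" using PE by simp
  also have "\<dots> = (transpose_mat X * F) * (P * X)"
    using assoc_mult_mat[OF Fc Pc X(1)] assoc_mult_mat[OF Xt Fc mult_carrier_mat[OF Pc X(1)]] by simp
  also have "\<dots> = P * X" using XtF Pc X(1) by (simp add: left_mult_one_mat)
  finally show ?thesis unfolding X_def E_def .
qed

lemma Phi_psd_and_le:
  assumes R: "psd_mat n R" and P: "psd_mat n P"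
  shows "psd_mat n (Phi R P)" "psd_mat n (P - Phi R P)"
proof -
  have Rc: "R \<in> carrier_mat n n" and Pc: "P \<in> carrier_mat n n" using R P psd_carrier by auto
  have Ps: "transpose_mat P = P" using P psd_sym unfolding sym_mat_def by auto
  define E where "E = 1\<^sub>m n + R * P"
  define X where "X = minv E"
  have Ec: "E \<in> carrier_mat n n" unfolding E_def using Rc Pc by simp
  have X: "X \<in> carrier_mat n n" "E * X = 1\<^sub>m n" "X * E = 1\<^sub>m n"
    using E_inv[OF R P] unfolding X_def E_def by auto
  have Ph: "Phi R P = P * X" using Phi_eq[OF P] unfolding X_def E_def .
  have PXc: "P * X \<in> carrier_mat n n" using Pc X by simp
  have sym: "transpose_mat (P * X) = P * X"
  proof -
    have "transpose_mat (P * X) = transpose_mat X * transpose_mat P"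
      by (rule transpose_mult) (use Pc X in auto)
    also have "\<dots> = P * X" using Ps XtP[OF R P] unfolding X_def E_def by simp
    finally show ?thesis .
  qed
  {
    fix v :: "real vec" assume v: "v \<in> carrier_vec n"
    define w where "w = X *\<^sub>v v"
    define p where "p = P *\<^sub>v w"
    define x where "x = R *\<^sub>v p"
    have wc: "w \<in> carrier_vec n" "p \<in> carrier_vec n" "x \<in> carrier_vec n"
      using X Rc Pc v unfolding w_def p_def x_def by simp_all
    have "(E * X) *\<^sub>v v = v" using X(2) v by simp
    then have Ew: "E *\<^sub>v w = v" using assoc_mult_mat_vec[OF Ec X(1) v] w_def by simp
    have vdec: "v = w + x" using Ew E_decomp[OF Rc Pc wc(1)] unfolding E_def x_def p_def by simp
    have PXv: "(P * X) *\<^sub>v v = p" unfolding p_def w_def using Pc X v by simp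
    have xp: "x \<bullet> p \<ge> 0"
    proof -
      have "x \<bullet> p = p \<bullet> x" by (rule comm_scalar_prod) (use wc in auto)
      then show ?thesis using psd_nn[OF R wc(2)] x_def by simp
    qed
    have vp: "v \<bullet> p = w \<bullet> p + x \<bullet> p" unfolding vdec
      by (rule add_scalar_prod_distrib) (use wc in auto)
    have q1: "v \<bullet> ((P * X) *\<^sub>v v) \<ge> 0" unfolding PXv vp
      using psd_nn[OF P wc(1)] xp p_def by simp
    have Pv: "P *\<^sub>v v = p + P *\<^sub>v x" unfolding vdec p_def
      by (rule mult_add_distrib_mat_vec) (use Pc wc in auto)
    have "v \<bullet> ((P - P * X) *\<^sub>v v) = v \<bullet> (P *\<^sub>v v - (P * X) *\<^sub>v v)"
      using minus_mult_distrib_mat_vec[OF Pc PXc v] by simp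
    also have "\<dots> = v \<bullet> (P *\<^sub>v v) - v \<bullet> p" unfolding PXv
      by (rule scalar_prod_minus_distrib) (use v Pc wc in auto)
    also have "v \<bullet> (P *\<^sub>v v) = v \<bullet> p + v \<bullet> (P *\<^sub>v x)" unfolding Pv
      by (rule scalar_prod_add_distrib) (use v Pc wc in auto)
    also have "v \<bullet> (P *\<^sub>v x) = x \<bullet> (P *\<^sub>v v)"
      by (rule sym_bil[OF Pc psd_sym[OF P] v wc(3)])
    also have "x \<bullet> (P *\<^sub>v v) = x \<bullet> p + x \<bullet> (P *\<^sub>v x)" unfolding Pv
      by (rule scalar_prod_add_distrib) (use v Pc wc in auto)
    finally have "v \<bullet> ((P - P * X) *\<^sub>v v) = x \<bullet> p + x \<bullet> (P *\<^sub>v x)" by simp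
    then have q2: "v \<bullet> ((P - P * X) *\<^sub>v v) \<ge> 0" using xp psd_nn[OF P wc(3)] by simp
    note q1 q2
  } note qq = this
  show "psd_mat n (Phi R P)" unfolding Ph psd_mat_def sym_mat_def using PXc sym qq by auto
  have "transpose_mat (P - P * X) = P - P * X" using transpose_minus[OF Pc PXc] Ps sym by simp
  then show "psd_mat n (P - Phi R P)" unfolding Ph psd_mat_def sym_mat_def using PXc Pc qq
    by (auto simp: minus_carrier_mat)
qed

lemma Phi_l1:
  assumes R: "psd_mat n R" and P: "psd_mat n P"
  shows "l1 (Phi R P) \<le> real n * l1 P"
proof -
  have Pc: "P \<in> carrier_mat n n" using P psd_carrier by auto
  have ps: "psd_mat n (Phi R P)" "psd_mat n (P - Phi R P)" using Phi_psd_and_le[OF R P] by auto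
  have Phc: "Phi R P \<in> carrier_mat n n" using ps psd_carrier by auto
  have "mtrace (P - Phi R P) \<ge> 0" using psd_trace_nonneg[OF ps(2)] .
  then have "mtrace (Phi R P) \<le> mtrace P" using mtrace_minus[OF Pc Phc] by simp
  also have "\<dots> \<le> l1 P" using trace_le_l1_psd[OF P] .
  finally have "mtrace (Phi R P) \<le> l1 P" .
  then have "real n * mtrace (Phi R P) \<le> real n * l1 P" by (simp add: mult_left_mono)
  with psd_l1_trace[OF ps(1)] show ?thesis by simp
qed

lemma X_formula:
  assumes R: "psd_mat n R" and P: "psd_mat n P"
  shows "minv (1\<^sub>m n + R * P) = 1\<^sub>m n - R * Phi R P"
proof -
  have Rc: "R \<in> carrier_mat n n" and Pc: "P \<in> carrier_mat n n" using R P psd_carrier by auto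
  define X where "X = minv (1\<^sub>m n + R * P)"
  have X: "X \<in> carrier_mat n n" "(1\<^sub>m n + R * P) * X = 1\<^sub>m n"
    using E_inv[OF R P] unfolding X_def by auto
  have "(1\<^sub>m n + R * P) * X = 1\<^sub>m n * X + (R * P) * X"
    by (rule add_mult_distrib_mat) (use Rc Pc X in auto)
  also have "\<dots> = X + R * (P * X)" using Rc Pc X by (simp add: left_mult_one_mat)
  finally have e: "X + R * (P * X) = 1\<^sub>m n" using X(2) by simp
  have Ph: "Phi R P = P * X" using Phi_eq[OF P] unfolding X_def .
  have "X = 1\<^sub>m n - R * (P * X)"
  proof (rule eq_matI)
    fix i j assume i: "i < dim_row (1\<^sub>m n - R * (P * X))" and j: "j < dim_col (1\<^sub>m n - R * (P * X))"
    have "(X + R * (P * X)) $$ (i,j) = 1\<^sub>m n $$ (i,j)" using e by simp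
    then show "X $$ (i,j) = (1\<^sub>m n - R * (P * X)) $$ (i,j)" using i j Rc Pc X by simp
  qed (use Rc Pc X in auto)
  then show ?thesis unfolding Ph X_def .
qed

lemma X_l1:
  assumes R: "psd_mat n R" and P: "psd_mat n P"
  shows "l1 (minv (1\<^sub>m n + R * P)) \<le> real n + l1 R * (real n * l1 P)"
proof -
  have Rc: "R \<in> carrier_mat n n" and Pc: "P \<in> carrier_mat n n" using R P psd_carrier by auto
  have Phc: "Phi R P \<in> carrier_mat n n" using Phi_psd_and_le[OF R P] psd_carrier by auto
  have "l1 (minv (1\<^sub>m n + R * P)) \<le> l1 (1\<^sub>m n) + l1 (R * Phi R P)"
    unfolding X_formula[OF R P] by (rule l1_minus) (use Rc Phc in auto)
  also have "\<dots> \<le> real n + l1 R * l1 (Phi R P)" using l1_mult[OF Rc Phc] l1_one by simp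
  also have "\<dots> \<le> real n + l1 R * (real n * l1 P)"
    using Phi_l1[OF R P] l1_nonneg[of R] by (simp add: mult_left_mono)
  finally show ?thesis .
qed

lemma Xt_inv:
  assumes R: "psd_mat n R" and P: "psd_mat n P"
  shows "transpose_mat (minv (1\<^sub>m n + R * P)) * (1\<^sub>m n + P * R) = 1\<^sub>m n"
proof -
  have Rc: "R \<in> carrier_mat n n" and Pc: "P \<in> carrier_mat n n" using R P psd_carrier by auto
  have Rs: "transpose_mat R = R" and Ps: "transpose_mat P = P"
    using R P psd_sym unfolding sym_mat_def by auto
  define E where "E = 1\<^sub>m n + R * P"
  define X where "X = minv E"
  have Ec: "E \<in> carrier_mat n n" unfolding E_def using Rc Pc by simp
  have X: "X \<in> carrier_mat n n" "E * X = 1\<^sub>m n" "X * E = 1\<^sub>m n"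
    using E_inv[OF R P] unfolding X_def E_def by auto
  have F: "transpose_mat E = 1\<^sub>m n + P * R"
  proof -
    have "transpose_mat E = transpose_mat (1\<^sub>m n) + transpose_mat (R * P)"
      unfolding E_def by (rule transpose_add) (use Rc Pc in auto)
    also have "transpose_mat (R * P) = transpose_mat P * transpose_mat R"
      by (rule transpose_mult) (use Rc Pc in auto)
    finally show ?thesis using Rs Ps by simp
  qed
  have "transpose_mat (E * X) = transpose_mat X * transpose_mat E"
    by (rule transpose_mult) (use Ec X in auto)
  then show ?thesis using X(2) F unfolding X_def E_def by simp
qed

lemma cancel_mat: fixes a b c :: "real mat"
  assumes "a \<in> carrier_mat n n" "b \<in> carrier_mat n n" "c \<in> carrier_mat n n"
  shows "(a + c) - (b + c) = a - b"
  by (rule eq_matI) (use assms in auto)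

lemma Phi_diff:
  assumes R: "psd_mat n R" and P: "psd_mat n P" and Q: "psd_mat n Q"
  shows "Phi R P - Phi R Q
    = transpose_mat (minv (1\<^sub>m n + R * P)) * (P - Q) * minv (1\<^sub>m n + R * Q)"
proof -
  have Rc: "R \<in> carrier_mat n n" and Pc: "P \<in> carrier_mat n n" and Qc: "Q \<in> carrier_mat n n"
    using R P Q psd_carrier by auto
  define XP where "XP = minv (1\<^sub>m n + R * P)"
  define XQ where "XQ = minv (1\<^sub>m n + R * Q)"
  define T where "T = transpose_mat XP"
  have XP: "XP \<in> carrier_mat n n" using E_inv[OF R P] unfolding XP_def by auto
  have XQ: "XQ \<in> carrier_mat n n" "(1\<^sub>m n + R * Q) * XQ = 1\<^sub>m n"
    using E_inv[OF R Q] unfolding XQ_def by auto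
  have Tc: "T \<in> carrier_mat n n" unfolding T_def using XP by simp
  have TF: "T * (1\<^sub>m n + P * R) = 1\<^sub>m n" using Xt_inv[OF R P] unfolding T_def XP_def .
  have TP: "T * P = P * XP" using XtP[OF R P] unfolding T_def XP_def .
  have TPc: "T * P \<in> carrier_mat n n" using Tc Pc by simp
  have TQc: "T * Q \<in> carrier_mat n n" using Tc Qc by simp
  have RQc: "R * Q \<in> carrier_mat n n" using Rc Qc by simp
  have PRc: "P * R \<in> carrier_mat n n" using Rc Pc by simp
  have QXc: "Q * XQ \<in> carrier_mat n n" using Qc XQ by simp
  define c where "c = (T * P) * (R * (Q * XQ))"
  have A: "P * XP = (T * P) * XQ + c"
  proof -
    have "P * XP = (T * P) * ((1\<^sub>m n + R * Q) * XQ)" using TP XQ(2) TPc by (simp add: right_mult_one_mat)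
    also have "\<dots> = ((T * P) * (1\<^sub>m n + R * Q)) * XQ"
      by (rule assoc_mult_mat[symmetric]) (use TPc RQc XQ in auto)
    also have "(T * P) * (1\<^sub>m n + R * Q) = (T * P) * 1\<^sub>m n + (T * P) * (R * Q)"
      by (rule mult_add_distrib_mat) (use TPc RQc in auto)
    also have "\<dots> = T * P + (T * P) * (R * Q)" using TPc by (simp add: right_mult_one_mat)
    also have "(T * P + (T * P) * (R * Q)) * XQ = (T * P) * XQ + ((T * P) * (R * Q)) * XQ"
      by (rule add_mult_distrib_mat) (use TPc RQc XQ in auto)
    also have "((T * P) * (R * Q)) * XQ = c"
      unfolding c_def using assoc_mult_mat[OF TPc RQc XQ(1)] assoc_mult_mat[OF Rc Qc XQ(1)] by simp
    finally show ?thesis .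
  qed
  have B: "Q * XQ = (T * Q) * XQ + c"
  proof -
    have "Q * XQ = (T * (1\<^sub>m n + P * R)) * (Q * XQ)" using TF QXc by (simp add: left_mult_one_mat)
    also have "T * (1\<^sub>m n + P * R) = T * 1\<^sub>m n + T * (P * R)"
      by (rule mult_add_distrib_mat) (use Tc PRc in auto)
    also have "\<dots> = T + T * (P * R)" using Tc by (simp add: right_mult_one_mat)
    also have "(T + T * (P * R)) * (Q * XQ) = T * (Q * XQ) + (T * (P * R)) * (Q * XQ)"
      by (rule add_mult_distrib_mat) (use Tc PRc QXc in auto)
    also have "T * (Q * XQ) = (T * Q) * XQ" using assoc_mult_mat[OF Tc Qc XQ(1)] by simp
    also have "(T * (P * R)) * (Q * XQ) = c"
      unfolding c_def using assoc_mult_mat[OF Tc Pc Rc] assoc_mult_mat[OF TPc Rc QXc] by simp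
    finally show ?thesis .
  qed
  have cc: "c \<in> carrier_mat n n" unfolding c_def using TPc Rc QXc by simp
  have a: "(T * P) * XQ \<in> carrier_mat n n" using TPc XQ by simp
  have b: "(T * Q) * XQ \<in> carrier_mat n n" using TQc XQ by simp
  have "Phi R P - Phi R Q = P * XP - Q * XQ"
    using Phi_eq[OF P, of R] Phi_eq[OF Q, of R] unfolding XP_def XQ_def by simp
  also have "\<dots> = ((T * P) * XQ + c) - ((T * Q) * XQ + c)" using A B by simp
  also have "\<dots> = (T * P) * XQ - (T * Q) * XQ"
    by (rule cancel_mat[OF a b cc])
  also have "\<dots> = (T * P - T * Q) * XQ"
    by (rule minus_mult_distrib_mat[symmetric]) (use TPc TQc XQ in auto)
  also have "T * P - T * Q = T * (P - Q)"
    by (rule mult_minus_distrib_mat[symmetric]) (use Tc Pc Qc in auto)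
  finally show ?thesis unfolding T_def XP_def XQ_def .
qed

lemma Phi_lip:
  assumes R: "psd_mat n R" and P: "psd_mat n P" and Q: "psd_mat n Q"
    and lR: "l1 R \<le> \<rho>" and lP: "l1 P \<le> \<beta>" and lQ: "l1 Q \<le> \<beta>"
  shows "l1 (Phi R P - Phi R Q) \<le> (real n + \<rho> * (real n * \<beta>))\<^sup>2 * l1 (P - Q)"
proof -
  have Rc: "R \<in> carrier_mat n n" and Pc: "P \<in> carrier_mat n n" and Qc: "Q \<in> carrier_mat n n"
    using R P Q psd_carrier by auto
  define XP where "XP = minv (1\<^sub>m n + R * P)"
  define XQ where "XQ = minv (1\<^sub>m n + R * Q)"
  have XP: "XP \<in> carrier_mat n n" using E_inv[OF R P] unfolding XP_def by auto
  have XQ: "XQ \<in> carrier_mat n n" using E_inv[OF R Q] unfolding XQ_def by auto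
  define K where "K = real n + \<rho> * (real n * \<beta>)"
  have bnd: "l1 (minv (1\<^sub>m n + R * M)) \<le> K" if M: "psd_mat n M" "l1 M \<le> \<beta>" for M
  proof -
    have "l1 (minv (1\<^sub>m n + R * M)) \<le> real n + l1 R * (real n * l1 M)" using X_l1[OF R M(1)] .
    also have "\<dots> \<le> real n + \<rho> * (real n * \<beta>)"
      using lR M(2) l1_nonneg[of R] l1_nonneg[of M]
      by (intro add_left_mono mult_mono mult_left_mono) auto
    finally show ?thesis unfolding K_def .
  qed
  have bP: "l1 XP \<le> K" using bnd[OF P lP] XP_def by simp
  have bQ: "l1 XQ \<le> K" using bnd[OF Q lQ] XQ_def by simp
  have PQc: "P - Q \<in> carrier_mat n n" using Pc Qc by (simp add: minus_carrier_mat)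
  have "l1 (Phi R P - Phi R Q) = l1 (transpose_mat XP * (P - Q) * XQ)"
    using Phi_diff[OF R P Q] unfolding XP_def XQ_def by simp
  also have "\<dots> \<le> l1 (transpose_mat XP * (P - Q)) * l1 XQ"
    by (rule l1_mult[of _ n n]) (use XP XQ PQc in auto)
  also have "\<dots> \<le> (l1 (transpose_mat XP) * l1 (P - Q)) * l1 XQ"
    by (intro mult_right_mono l1_mult l1_nonneg) (use XP PQc in auto)
  also have "\<dots> \<le> (K * l1 (P - Q)) * K"
    using bP bQ l1_nonneg[of XQ] l1_nonneg[of "P - Q"] l1_nonneg[of XP]
    unfolding l1_transpose by (intro mult_mono) auto
  also have "\<dots> = K\<^sup>2 * l1 (P - Q)" by (simp add: power2_eq_square)
  finally show ?thesis unfolding K_def .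
qed

lemma wsum_foldr:
  fixes R :: "nat \<Rightarrow> nat \<Rightarrow> real mat"
  assumes "\<forall>i\<in>set xs. psd_mat n (R i k) \<and> 0 \<le> \<theta> k i \<and> \<theta> k i \<le> 1"
  shows "psd_mat n (foldr (\<lambda>i M. \<theta> k i \<cdot>\<^sub>m R i k + M) xs (0\<^sub>m n n)) \<and>
         l1 (foldr (\<lambda>i M. \<theta> k i \<cdot>\<^sub>m R i k + M) xs (0\<^sub>m n n)) \<le> sum_list (map (\<lambda>i. l1 (R i k)) xs)"
  using assms
proof (induction xs)
  case Nil
  show ?case using psd_zero l1_zero by simp
next
  case (Cons a xs)
  define F where "F = foldr (\<lambda>i M. \<theta> k i \<cdot>\<^sub>m R i k + M) xs (0\<^sub>m n n)"
  have IH: "psd_mat n F" "l1 F \<le> sum_list (map (\<lambda>i. l1 (R i k)) xs)"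
    using Cons unfolding F_def by auto
  have a: "psd_mat n (R a k)" "0 \<le> \<theta> k a" "\<theta> k a \<le> 1" using Cons.prems by auto
  have Fc: "F \<in> carrier_mat n n" using IH psd_carrier by auto
  have Rc: "R a k \<in> carrier_mat n n" using a psd_carrier by auto
  have "psd_mat n (\<theta> k a \<cdot>\<^sub>m R a k + F)" by (rule psd_add[OF psd_smult[OF a(1,2)] IH(1)])
  moreover have "l1 (\<theta> k a \<cdot>\<^sub>m R a k + F) \<le> l1 (R a k) + sum_list (map (\<lambda>i. l1 (R i k)) xs)"
  proof -
    have "l1 (\<theta> k a \<cdot>\<^sub>m R a k + F) \<le> l1 (\<theta> k a \<cdot>\<^sub>m R a k) + l1 F"
      by (rule l1_add) (use Rc Fc in auto)
    also have "l1 (\<theta> k a \<cdot>\<^sub>m R a k) = \<bar>\<theta> k a\<bar> * l1 (R a k)" by (rule l1_smult)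
    also have "\<dots> \<le> l1 (R a k)" using a l1_nonneg[of "R a k"] by (simp add: mult_left_le_one_le)
    finally show ?thesis using IH(2) by simp
  qed
  ultimately show ?case unfolding F_def by simp
qed

lemma hpred_l1:
  assumes A: "A \<in> carrier_mat n n" and P: "P \<in> carrier_mat n n" and W: "W \<in> carrier_mat n n"
  shows "l1 (hpred A W P) \<le> l1 A * l1 P * l1 A + l1 W"
proof -
  have "l1 (hpred A W P) \<le> l1 (A * P * transpose_mat A) + l1 W"
    unfolding hpred_def by (rule l1_add) (use A P W in auto)
  also have "l1 (A * P * transpose_mat A) \<le> l1 (A * P) * l1 (transpose_mat A)"
    by (rule l1_mult) (use A P in auto)
  also have "\<dots> \<le> l1 A * l1 P * l1 A"
    unfolding l1_transpose by (intro mult_right_mono l1_mult l1_nonneg) (use A P in auto)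
  finally show ?thesis by simp
qed

lemma hpred_diff_l1:
  assumes A: "A \<in> carrier_mat n n" and P: "P \<in> carrier_mat n n" and Q: "Q \<in> carrier_mat n n"
    and W: "W \<in> carrier_mat n n"
  shows "l1 (hpred A W P - hpred A W Q) \<le> l1 A * l1 (P - Q) * l1 A"
proof -
  have APc: "A * P * transpose_mat A \<in> carrier_mat n n" using A P by simp
  have AQc: "A * Q * transpose_mat A \<in> carrier_mat n n" using A Q by simp
  have "hpred A W P - hpred A W Q = A * P * transpose_mat A - A * Q * transpose_mat A"
    unfolding hpred_def by (rule cancel_mat[OF APc AQc W])
  also have "\<dots> = (A * P - A * Q) * transpose_mat A"
    by (rule minus_mult_distrib_mat[symmetric]) (use A P Q in auto)
  also have "A * P - A * Q = A * (P - Q)"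
    by (rule mult_minus_distrib_mat[symmetric]) (use A P Q in auto)
  finally have e: "hpred A W P - hpred A W Q = A * (P - Q) * transpose_mat A" .
  have PQ: "P - Q \<in> carrier_mat n n" using Q by (simp add: minus_carrier_mat)
  have "l1 (A * (P - Q) * transpose_mat A) \<le> l1 (A * (P - Q)) * l1 (transpose_mat A)"
    by (rule l1_mult[of _ n n]) (use A PQ in auto)
  also have "\<dots> \<le> l1 A * l1 (P - Q) * l1 A"
    unfolding l1_transpose by (intro mult_right_mono l1_mult l1_nonneg) (use A PQ in auto)
  finally show ?thesis unfolding e .
qed

lemma cost_nonneg:
  fixes R :: "nat \<Rightarrow> nat \<Rightarrow> real mat" and A :: "nat \<Rightarrow> real mat" and W :: "real mat"
    and \<rho> \<alpha> :: real
  assumes Rw: "\<forall>k\<le>T. \<forall>\<theta>::nat\<Rightarrow>nat\<Rightarrow>real. (\<forall>i\<in>{1..N}. 0 \<le> \<theta> k i \<and> \<theta> k i \<le> 1) \<longrightarrow>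
                  psd_mat n (wsum n N R \<theta> k) \<and> l1 (wsum n N R \<theta> k) \<le> \<rho>"
    and Ak: "\<forall>k\<le>T. A k \<in> carrier_mat n n \<and> l1 (A k) \<le> \<alpha>"
    and W: "psd_mat n W"
  shows "\<forall>k (\<theta>::nat\<Rightarrow>nat\<Rightarrow>real) P. k + d \<le> T \<longrightarrow> (\<forall>j\<in>{k..k+d}. \<forall>i\<in>{1..N}. 0 \<le> \<theta> j i \<and> \<theta> j i \<le> 1)
     \<longrightarrow> psd_mat n P \<longrightarrow> relaxed_cost A W N R \<theta> d k P \<ge> 0"
proof (induction d)
  case 0
  show ?case
  proof (intro allI impI)
    fix k and \<theta> :: "nat \<Rightarrow> nat \<Rightarrow> real" and P assume k: "k + 0 \<le> T" and th: "\<forall>j\<in>{k..k+0}. \<forall>i\<in>{1..N}. 0 \<le> \<theta> j i \<and> \<theta> j i \<le> 1"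
      and P: "psd_mat n P"
    have dr: "dim_row P = n" using P psd_carrier by auto
    have "psd_mat n (wsum n N R \<theta> k)" using Rw k th by auto
    then show "relaxed_cost A W N R \<theta> 0 k P \<ge> 0"
      using psd_trace_nonneg[OF Phi_psd_and_le(1)[OF _ P]] dr by simp
  qed
next
  case (Suc d)
  show ?case
  proof (intro allI impI)
    fix k and \<theta> :: "nat \<Rightarrow> nat \<Rightarrow> real" and P assume k: "k + Suc d \<le> T"
      and th: "\<forall>j\<in>{k..k + Suc d}. \<forall>i\<in>{1..N}. 0 \<le> \<theta> j i \<and> \<theta> j i \<le> 1"
      and P: "psd_mat n P"
    have dr: "dim_row P = n" using P psd_carrier by auto
    have Rk: "psd_mat n (wsum n N R \<theta> k)" using Rw k th by auto
    define Pk where "Pk = Phi (wsum n N R \<theta> k) P"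
    have Pk: "psd_mat n Pk" unfolding Pk_def using Phi_psd_and_le(1)[OF Rk P] .
    have h: "psd_mat n (hpred (A k) W Pk)" using hpred_psd[OF Pk _ W] Ak k by auto
    have "relaxed_cost A W N R \<theta> d (Suc k) (hpred (A k) W Pk) \<ge> 0"
      using Suc.IH k th h by auto
    then show "relaxed_cost A W N R \<theta> (Suc d) k P \<ge> 0"
      using psd_trace_nonneg[OF Pk] dr unfolding Pk_def by (simp add: Let_def)
  qed
qed

lemma cost_lip:
  fixes R :: "nat \<Rightarrow> nat \<Rightarrow> real mat" and A :: "nat \<Rightarrow> real mat" and W :: "real mat"
    and \<rho> \<alpha> :: real
  assumes Rw: "\<forall>k\<le>T. \<forall>\<theta>::nat\<Rightarrow>nat\<Rightarrow>real. (\<forall>i\<in>{1..N}. 0 \<le> \<theta> k i \<and> \<theta> k i \<le> 1) \<longrightarrow>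
                  psd_mat n (wsum n N R \<theta> k) \<and> l1 (wsum n N R \<theta> k) \<le> \<rho>"
    and Ak: "\<forall>k\<le>T. A k \<in> carrier_mat n n \<and> l1 (A k) \<le> \<alpha>"
    and W: "psd_mat n W"
  shows "\<forall>\<beta>. \<exists>L\<ge>0. \<forall>k (\<theta>::nat\<Rightarrow>nat\<Rightarrow>real) P Q. k + d \<le> T \<longrightarrow>
     (\<forall>j\<in>{k..k+d}. \<forall>i\<in>{1..N}. 0 \<le> \<theta> j i \<and> \<theta> j i \<le> 1) \<longrightarrow>
     psd_mat n P \<longrightarrow> psd_mat n Q \<longrightarrow> l1 P \<le> \<beta> \<longrightarrow> l1 Q \<le> \<beta> \<longrightarrow>
     \<bar>relaxed_cost A W N R \<theta> d k P - relaxed_cost A W N R \<theta> d k Q\<bar> \<le> L * l1 (P - Q)"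
proof (induction d)
  case 0
  show ?case
  proof (intro allI)
    fix \<beta> :: real
    define c where "c = (real n + \<rho> * (real n * \<beta>))\<^sup>2"
    show "\<exists>L\<ge>0. \<forall>k (\<theta>::nat\<Rightarrow>nat\<Rightarrow>real) P Q. k + 0 \<le> T \<longrightarrow>
     (\<forall>j\<in>{k..k+0}. \<forall>i\<in>{1..N}. 0 \<le> \<theta> j i \<and> \<theta> j i \<le> 1) \<longrightarrow>
     psd_mat n P \<longrightarrow> psd_mat n Q \<longrightarrow> l1 P \<le> \<beta> \<longrightarrow> l1 Q \<le> \<beta> \<longrightarrow>
     \<bar>relaxed_cost A W N R \<theta> 0 k P - relaxed_cost A W N R \<theta> 0 k Q\<bar> \<le> L * l1 (P - Q)"
    proof (intro exI[of _ c] conjI allI impI)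
      show "0 \<le> c" unfolding c_def by simp
      fix k and \<theta> :: "nat \<Rightarrow> nat \<Rightarrow> real" and P Q
      assume k: "k + 0 \<le> T" and th: "\<forall>j\<in>{k..k+0}. \<forall>i\<in>{1..N}. 0 \<le> \<theta> j i \<and> \<theta> j i \<le> 1"
        and P: "psd_mat n P" and Q: "psd_mat n Q" and lP: "l1 P \<le> \<beta>" and lQ: "l1 Q \<le> \<beta>"
      have drP: "dim_row P = n" using P psd_carrier by auto
      have drQ: "dim_row Q = n" using Q psd_carrier by auto
      have Rk: "psd_mat n (wsum n N R \<theta> k)" "l1 (wsum n N R \<theta> k) \<le> \<rho>" using Rw k th by auto
      let ?R = "wsum n N R \<theta> k"
      have c1: "Phi ?R P \<in> carrier_mat n n" using Phi_psd_and_le(1)[OF Rk(1) P] psd_carrier by auto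
      have c2: "Phi ?R Q \<in> carrier_mat n n" using Phi_psd_and_le(1)[OF Rk(1) Q] psd_carrier by auto
      have "\<bar>mtrace (Phi ?R P) - mtrace (Phi ?R Q)\<bar> = \<bar>mtrace (Phi ?R P - Phi ?R Q)\<bar>"
        using mtrace_minus[OF c1 c2] by simp
      also have "\<dots> \<le> l1 (Phi ?R P - Phi ?R Q)"
        by (rule mtrace_le_l1[of _ n]) (use c2 in \<open>simp add: minus_carrier_mat\<close>)
      also have "\<dots> \<le> c * l1 (P - Q)" unfolding c_def by (rule Phi_lip[OF Rk(1) P Q Rk(2) lP lQ])
      finally show "\<bar>relaxed_cost A W N R \<theta> 0 k P - relaxed_cost A W N R \<theta> 0 k Q\<bar> \<le> c * l1 (P - Q)"
        using drP drQ by simp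
    qed
  qed
next
  case (Suc d)
  show ?case
  proof (intro allI)
    fix \<beta> :: real
    define c where "c = (real n + \<rho> * (real n * \<beta>))\<^sup>2"
    define \<beta>' where "\<beta>' = \<alpha> * (real n * \<beta>) * \<alpha> + l1 W"
    obtain L' where L': "L' \<ge> 0" "\<forall>k (\<theta>::nat\<Rightarrow>nat\<Rightarrow>real) P Q. k + d \<le> T \<longrightarrow>
     (\<forall>j\<in>{k..k+d}. \<forall>i\<in>{1..N}. 0 \<le> \<theta> j i \<and> \<theta> j i \<le> 1) \<longrightarrow>
     psd_mat n P \<longrightarrow> psd_mat n Q \<longrightarrow> l1 P \<le> \<beta>' \<longrightarrow> l1 Q \<le> \<beta>' \<longrightarrow>
     \<bar>relaxed_cost A W N R \<theta> d k P - relaxed_cost A W N R \<theta> d k Q\<bar> \<le> L' * l1 (P - Q)"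
      using Suc.IH by blast
    define L where "L = c + L' * (\<alpha> * c * \<alpha>)"
    show "\<exists>L\<ge>0. \<forall>k (\<theta>::nat\<Rightarrow>nat\<Rightarrow>real) P Q. k + Suc d \<le> T \<longrightarrow>
     (\<forall>j\<in>{k..k+Suc d}. \<forall>i\<in>{1..N}. 0 \<le> \<theta> j i \<and> \<theta> j i \<le> 1) \<longrightarrow>
     psd_mat n P \<longrightarrow> psd_mat n Q \<longrightarrow> l1 P \<le> \<beta> \<longrightarrow> l1 Q \<le> \<beta> \<longrightarrow>
     \<bar>relaxed_cost A W N R \<theta> (Suc d) k P - relaxed_cost A W N R \<theta> (Suc d) k Q\<bar> \<le> L * l1 (P - Q)"
    proof (intro exI[of _ L] conjI allI impI)
      show "0 \<le> L"
      proof -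
        have c0: "c \<ge> 0" unfolding c_def by simp
        have "\<alpha> * c * \<alpha> = c * (\<alpha> * \<alpha>)" by (simp add: algebra_simps)
        also have "\<dots> \<ge> 0" using c0 by simp
        finally have "\<alpha> * c * \<alpha> \<ge> 0" .
        then show ?thesis unfolding L_def using c0 L'(1) by simp
      qed
      fix k and \<theta> :: "nat \<Rightarrow> nat \<Rightarrow> real" and P Q
      assume k: "k + Suc d \<le> T" and th: "\<forall>j\<in>{k..k+Suc d}. \<forall>i\<in>{1..N}. 0 \<le> \<theta> j i \<and> \<theta> j i \<le> 1"
        and P: "psd_mat n P" and Q: "psd_mat n Q" and lP: "l1 P \<le> \<beta>" and lQ: "l1 Q \<le> \<beta>"
      have drP: "dim_row P = n" using P psd_carrier by auto
      have drQ: "dim_row Q = n" using Q psd_carrier by auto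
      have Rk: "psd_mat n (wsum n N R \<theta> k)" "l1 (wsum n N R \<theta> k) \<le> \<rho>" using Rw k th by auto
      have A: "A k \<in> carrier_mat n n" "l1 (A k) \<le> \<alpha>" using Ak k by auto
      have Wc: "W \<in> carrier_mat n n" using W psd_carrier by auto
      have a0: "0 \<le> \<alpha>" using A(2) l1_nonneg[of "A k"] by simp
      let ?R = "wsum n N R \<theta> k"
      define Pk where "Pk = Phi ?R P"
      define Qk where "Qk = Phi ?R Q"
      have Pk: "psd_mat n Pk" unfolding Pk_def by (rule Phi_psd_and_le(1)[OF Rk(1) P])
      have Qk: "psd_mat n Qk" unfolding Qk_def by (rule Phi_psd_and_le(1)[OF Rk(1) Q])
      have c1: "Pk \<in> carrier_mat n n" using Pk psd_carrier by auto
      have c2: "Qk \<in> carrier_mat n n" using Qk psd_carrier by auto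
      have dPQ: "l1 (Pk - Qk) \<le> c * l1 (P - Q)" unfolding c_def Pk_def Qk_def
        by (rule Phi_lip[OF Rk(1) P Q Rk(2) lP lQ])
      have tr: "\<bar>mtrace Pk - mtrace Qk\<bar> \<le> c * l1 (P - Q)"
      proof -
        have "\<bar>mtrace Pk - mtrace Qk\<bar> = \<bar>mtrace (Pk - Qk)\<bar>" using mtrace_minus[OF c1 c2] by simp
        also have "\<dots> \<le> l1 (Pk - Qk)"
          by (rule mtrace_le_l1[of _ n]) (use c2 in \<open>simp add: minus_carrier_mat\<close>)
        finally show ?thesis using dPQ by simp
      qed
      define P' where "P' = hpred (A k) W Pk"
      define Q' where "Q' = hpred (A k) W Qk"
      have P': "psd_mat n P'" unfolding P'_def using hpred_psd[OF Pk A(1) W] .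
      have Q': "psd_mat n Q'" unfolding Q'_def using hpred_psd[OF Qk A(1) W] .
      have bnd: "l1 (hpred (A k) W M) \<le> \<beta>'" if M: "psd_mat n M" "l1 M \<le> real n * \<beta>" for M
      proof -
        have Mc: "M \<in> carrier_mat n n" using M psd_carrier by auto
        have "l1 (hpred (A k) W M) \<le> l1 (A k) * l1 M * l1 (A k) + l1 W" by (rule hpred_l1[OF A(1) Mc Wc])
        also have "\<dots> \<le> \<alpha> * (real n * \<beta>) * \<alpha> + l1 W"
          using A(2) M(2) l1_nonneg[of "A k"] l1_nonneg[of M] a0
          by (intro add_right_mono mult_mono) (auto intro: mult_nonneg_nonneg)
        finally show ?thesis unfolding \<beta>'_def .
      qed
      have lP': "l1 P' \<le> \<beta>'" unfolding P'_def Pk_def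
        by (rule bnd[OF Phi_psd_and_le(1)[OF Rk(1) P]]) (use order.trans[OF Phi_l1[OF Rk(1) P] mult_left_mono[OF lP]] in simp)
      have lQ': "l1 Q' \<le> \<beta>'" unfolding Q'_def Qk_def
        by (rule bnd[OF Phi_psd_and_le(1)[OF Rk(1) Q]]) (use order.trans[OF Phi_l1[OF Rk(1) Q] mult_left_mono[OF lQ]] in simp)
      have th': "\<forall>j\<in>{Suc k..Suc k+d}. \<forall>i\<in>{1..N}. 0 \<le> \<theta> j i \<and> \<theta> j i \<le> 1" using th by auto
      have rec: "\<bar>relaxed_cost A W N R \<theta> d (Suc k) P' - relaxed_cost A W N R \<theta> d (Suc k) Q'\<bar> \<le> L' * l1 (P' - Q')"
        using L'(2) k th' P' Q' lP' lQ' by auto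
      have "l1 (P' - Q') \<le> l1 (A k) * l1 (Pk - Qk) * l1 (A k)" unfolding P'_def Q'_def
        by (rule hpred_diff_l1[OF A(1) c1 c2 Wc])
      also have "\<dots> \<le> \<alpha> * (c * l1 (P - Q)) * \<alpha>"
        using A(2) dPQ l1_nonneg[of "A k"] l1_nonneg[of "Pk - Qk"] a0
        by (intro mult_mono) (auto intro: mult_nonneg_nonneg)
      finally have dPQ': "l1 (P' - Q') \<le> \<alpha> * (c * l1 (P - Q)) * \<alpha>" .
      have "\<bar>relaxed_cost A W N R \<theta> (Suc d) k P - relaxed_cost A W N R \<theta> (Suc d) k Q\<bar>
          = \<bar>(mtrace Pk - mtrace Qk) + (relaxed_cost A W N R \<theta> d (Suc k) P' - relaxed_cost A W N R \<theta> d (Suc k) Q')\<bar>"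
        using drP drQ unfolding Pk_def Qk_def P'_def Q'_def by (simp add: Let_def)
      also have "\<dots> \<le> c * l1 (P - Q) + L' * l1 (P' - Q')"
        using tr rec by linarith
      also have "\<dots> \<le> c * l1 (P - Q) + L' * (\<alpha> * (c * l1 (P - Q)) * \<alpha>)"
        using dPQ' L'(1) by (simp add: mult_left_mono)
      also have "\<dots> = L * l1 (P - Q)" unfolding L_def by (simp add: algebra_simps)
      finally show "\<bar>relaxed_cost A W N R \<theta> (Suc d) k P - relaxed_cost A W N R \<theta> (Suc d) k Q\<bar> \<le> L * l1 (P - Q)" .
    qed
  qed
qed

lemma psd_congr2: assumes P: "psd_mat m P" and A: "A \<in> carrier_mat n m"
  shows "psd_mat n (A * P * transpose_mat A)"
proof -
  have Pc: "P \<in> carrier_mat m m" using psd_carrier[OF P] .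
  have Ps: "transpose_mat P = P" using psd_sym[OF P] unfolding sym_mat_def .
  have "transpose_mat (A * P * transpose_mat A) = A * P * transpose_mat A"
  proof -
    have "transpose_mat (A * P * transpose_mat A) = transpose_mat (transpose_mat A) * transpose_mat (A * P)"
      by (rule transpose_mult[of _ n m]) (use A Pc in auto)
    also have "transpose_mat (A * P) = transpose_mat P * transpose_mat A"
      by (rule transpose_mult[of _ n m]) (use A Pc in auto)
    finally show ?thesis using A Pc Ps by simp
  qed
  moreover have "v \<bullet> ((A * P * transpose_mat A) *\<^sub>v v) \<ge> 0" if v: "v \<in> carrier_vec n" for v
  proof -
    let ?w = "transpose_mat A *\<^sub>v v"
    have w: "?w \<in> carrier_vec m" using A v by simp
    have "(A * P * transpose_mat A) *\<^sub>v v = (A * P) *\<^sub>v ?w"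
      by (rule assoc_mult_mat_vec) (use A Pc v in auto)
    also have "\<dots> = A *\<^sub>v (P *\<^sub>v ?w)"
      by (rule assoc_mult_mat_vec) (use A Pc w in auto)
    finally have "v \<bullet> ((A * P * transpose_mat A) *\<^sub>v v) = v \<bullet> (A *\<^sub>v (P *\<^sub>v ?w))" by simp
    also have "\<dots> = ?w \<bullet> (P *\<^sub>v ?w)"
      using transpose_vec_mult_scalar[OF A, of "P *\<^sub>v ?w" v] Pc w v by simp
    finally show ?thesis using psd_nn[OF P w] by simp
  qed
  ultimately show ?thesis unfolding psd_mat_def sym_mat_def using A Pc by auto
qed

lemma minv_pd: assumes V: "pd_mat m V" shows "psd_mat m (minv V)"
proof -
  have Vc: "V \<in> carrier_mat m m" and Vs: "transpose_mat V = V"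
    using V unfolding pd_mat_def sym_mat_def by auto
  have inj: "v = 0\<^sub>v m" if v: "v \<in> carrier_vec m" and z: "V *\<^sub>v v = 0\<^sub>v m" for v
  proof (rule ccontr)
    assume "v \<noteq> 0\<^sub>v m"
    then have "v \<bullet> (V *\<^sub>v v) > 0" using V v unfolding pd_mat_def by auto
    then show False using z v by simp
  qed
  have ex: "\<exists>X\<in>carrier_mat m m. V * X = 1\<^sub>m m \<and> X * V = 1\<^sub>m m"
    by (rule inj_imp_inverse[OF Vc inj])
  define X where "X = minv V"
  have X: "X \<in> carrier_mat m m" "V * X = 1\<^sub>m m" "X * V = 1\<^sub>m m"
    using minv_props[OF Vc ex] unfolding X_def by auto
  have Xt: "transpose_mat X \<in> carrier_mat m m" using X by simp
  have "transpose_mat (X * V) = transpose_mat V * transpose_mat X"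
    by (rule transpose_mult) (use X Vc in auto)
  then have 1: "V * transpose_mat X = 1\<^sub>m m" using X(3) Vs by simp
  have "transpose_mat (V * X) = transpose_mat X * transpose_mat V"
    by (rule transpose_mult) (use X Vc in auto)
  then have 2: "transpose_mat X * V = 1\<^sub>m m" using X(2) Vs by simp
  have XX: "X = transpose_mat X" using minv_eq[OF Vc Xt 1 2] unfolding X_def .
  have "v \<bullet> (X *\<^sub>v v) \<ge> 0" if v: "v \<in> carrier_vec m" for v
  proof -
    define w where "w = X *\<^sub>v v"
    have w: "w \<in> carrier_vec m" using X v unfolding w_def by simp
    have "(V * X) *\<^sub>v v = v" using X(2) v by simp
    then have Vw: "V *\<^sub>v w = v" using assoc_mult_mat_vec[OF Vc X(1) v] w_def by simp
    have "v \<bullet> (X *\<^sub>v v) = (V *\<^sub>v w) \<bullet> w" unfolding w_def[symmetric] Vw ..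
    also have "\<dots> = w \<bullet> (V *\<^sub>v w)" by (rule comm_scalar_prod) (use Vc w in auto)
    finally show ?thesis using psd_nn[OF pd_psd[OF V] w] by simp
  qed
  then show ?thesis unfolding psd_mat_def sym_mat_def X_def[symmetric] using X(1) XX by auto
qed

lemma info_psd: assumes C: "C \<in> carrier_mat m n" and V: "pd_mat m V"
  shows "psd_mat n (info_mat C V)"
proof -
  have "info_mat C V = transpose_mat C * minv V * transpose_mat (transpose_mat C)"
    unfolding info_mat_def by simp
  also have "psd_mat n \<dots>" by (rule psd_congr2[OF minv_pd[OF V]]) (use C in simp)
  finally show ?thesis .
qed

lemma frob_l1: assumes M: "M \<in> carrier_mat n n" shows "l1 M \<le> real n * real n * frob_norm M"
proof -
  have e: "\<bar>M $$ (i,j)\<bar> \<le> frob_norm M" if i: "i < n" and j: "j < n" for i j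
  proof -
    have "(M $$ (i,j))\<^sup>2 \<le> (\<Sum>j'<n. (M $$ (i,j'))\<^sup>2)"
      by (rule member_le_sum[where f="\<lambda>j'. (M $$ (i,j'))\<^sup>2"]) (use j in auto)
    also have "\<dots> \<le> (\<Sum>i'<n. \<Sum>j'<n. (M $$ (i',j'))\<^sup>2)"
      by (rule member_le_sum[where f="\<lambda>i'. \<Sum>j'<n. (M $$ (i',j'))\<^sup>2"]) (use i in \<open>auto intro: sum_nonneg\<close>)
    finally have "sqrt ((M $$ (i,j))\<^sup>2) \<le> sqrt (\<Sum>i'<n. \<Sum>j'<n. (M $$ (i',j'))\<^sup>2)"
      by (rule real_sqrt_le_mono)
    then show ?thesis unfolding frob_norm_def using M by simp
  qed
  have "l1 M = (\<Sum>i<n. \<Sum>j<n. \<bar>M $$ (i,j)\<bar>)" unfolding l1_def using M by simp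
  also have "\<dots> \<le> (\<Sum>i<n. \<Sum>j<n. frob_norm M)" by (intro sum_mono e) auto
  finally show ?thesis by simp
qed

lemma inf_lip:
  fixes f g :: "'a \<Rightarrow> real"
  assumes S: "S \<noteq> {}" and f0: "\<forall>x\<in>S. f x \<ge> 0" and g0: "\<forall>x\<in>S. g x \<ge> 0"
    and d: "\<forall>x\<in>S. \<bar>f x - g x\<bar> \<le> M"
  shows "\<bar>(INF x\<in>S. f x) - (INF x\<in>S. g x)\<bar> \<le> M"
proof -
  have bf: "bdd_below (f ` S)" using f0 by (intro bdd_belowI[where m=0]) auto
  have bg: "bdd_below (g ` S)" using g0 by (intro bdd_belowI[where m=0]) auto
  have 1: "(INF x\<in>S. f x) - M \<le> (INF x\<in>S. g x)"
  proof (rule cINF_greatest[OF S])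
    fix x assume x: "x \<in> S"
    have "(INF x\<in>S. f x) \<le> f x" by (rule cINF_lower[OF bf x])
    then show "(INF x\<in>S. f x) - M \<le> g x" using d x by force
  qed
  have 2: "(INF x\<in>S. g x) - M \<le> (INF x\<in>S. f x)"
  proof (rule cINF_greatest[OF S])
    fix x assume x: "x \<in> S"
    have "(INF x\<in>S. g x) \<le> g x" by (rule cINF_lower[OF bg x])
    then show "(INF x\<in>S. g x) - M \<le> f x" using d x by force
  qed
  from 1 2 show ?thesis by linarith
qed

lemma main_generic:
  fixes n N T :: nat and A :: "nat \<Rightarrow> real mat" and W :: "real mat"
    and R :: "nat \<Rightarrow> nat \<Rightarrow> real mat" and B :: real
  assumes N_pos: "N \<ge> 1"
    and A_dim: "\<forall>k\<le>T. A k \<in> carrier_mat n n"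
    and W_pd: "pd_mat n W"
    and Rpsd: "\<forall>k\<le>T. \<forall>i\<in>{1..N}. psd_mat n (R i k)"
    and B_pos: "B > 0"
  shows "\<exists>K>0. \<forall>t\<le>T. \<forall>P Q. psd_mat n P \<longrightarrow> psd_mat n Q \<longrightarrow>
           frob_norm P \<le> B \<longrightarrow> frob_norm Q \<le> B \<longrightarrow>
           \<bar>U_relaxed A W N R T t P - U_relaxed A W N R T t Q\<bar> \<le> K * frob_norm (P - Q)"
proof -
  define \<rho> where "\<rho> = (\<Sum>k\<le>T. \<Sum>i\<in>{1..N}. l1 (R i k))"
  define \<alpha> where "\<alpha> = (\<Sum>k\<le>T. l1 (A k))"
  have Rw: "\<forall>k\<le>T. \<forall>\<theta>::nat\<Rightarrow>nat\<Rightarrow>real. (\<forall>i\<in>{1..N}. 0 \<le> \<theta> k i \<and> \<theta> k i \<le> 1) \<longrightarrow>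
                  psd_mat n (wsum n N R \<theta> k) \<and> l1 (wsum n N R \<theta> k) \<le> \<rho>"
  proof (intro allI impI)
    fix k and \<theta> :: "nat \<Rightarrow> nat \<Rightarrow> real"
    assume k: "k \<le> T" and th: "\<forall>i\<in>{1..N}. 0 \<le> \<theta> k i \<and> \<theta> k i \<le> 1"
    have "\<forall>i\<in>set [1..<Suc N]. psd_mat n (R i k) \<and> 0 \<le> \<theta> k i \<and> \<theta> k i \<le> 1"
      using Rpsd k th by auto
    from wsum_foldr[of "[1..<Suc N]" n R k \<theta>, OF this]
    have h: "psd_mat n (wsum n N R \<theta> k)" "l1 (wsum n N R \<theta> k) \<le> sum_list (map (\<lambda>i. l1 (R i k)) [1..<Suc N])"
      unfolding wsum_def by auto
    have "sum_list (map (\<lambda>i. l1 (R i k)) [1..<Suc N]) = (\<Sum>i\<in>{1..N}. l1 (R i k))"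
    proof -
      have "sum_list (map (\<lambda>i. l1 (R i k)) [1..<Suc N]) = (\<Sum>i\<in>set [1..<Suc N]. l1 (R i k))"
        by (rule sum_set_upt_conv_sum_list_nat[symmetric])
      also have "set [1..<Suc N] = {1..N}" by auto
      finally show ?thesis .
    qed
    also have "\<dots> \<le> \<rho>" unfolding \<rho>_def
      by (rule member_le_sum[where f="\<lambda>k. \<Sum>i\<in>{1..N}. l1 (R i k)"]) (use k in \<open>auto intro: sum_nonneg l1_nonneg\<close>)
    finally show "psd_mat n (wsum n N R \<theta> k) \<and> l1 (wsum n N R \<theta> k) \<le> \<rho>" using h by simp
  qed
  have Ak: "\<forall>k\<le>T. A k \<in> carrier_mat n n \<and> l1 (A k) \<le> \<alpha>"
  proof (intro allI impI conjI)
    fix k assume k: "k \<le> T"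
    show "A k \<in> carrier_mat n n" using A_dim k by auto
    show "l1 (A k) \<le> \<alpha>" unfolding \<alpha>_def
      by (rule member_le_sum[where f="\<lambda>k. l1 (A k)"]) (use k in \<open>auto intro: l1_nonneg\<close>)
  qed
  have Wp: "psd_mat n W" using pd_psd[OF W_pd] .
  define \<beta> where "\<beta> = real n * real n * B"
  have "\<forall>d. \<exists>L\<ge>0. \<forall>k (\<theta>::nat\<Rightarrow>nat\<Rightarrow>real) P Q. k + d \<le> T \<longrightarrow>
     (\<forall>j\<in>{k..k+d}. \<forall>i\<in>{1..N}. 0 \<le> \<theta> j i \<and> \<theta> j i \<le> 1) \<longrightarrow>
     psd_mat n P \<longrightarrow> psd_mat n Q \<longrightarrow> l1 P \<le> \<beta> \<longrightarrow> l1 Q \<le> \<beta> \<longrightarrow>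
     \<bar>relaxed_cost A W N R \<theta> d k P - relaxed_cost A W N R \<theta> d k Q\<bar> \<le> L * l1 (P - Q)"
    using cost_lip[OF Rw Ak Wp] by blast
  then obtain Lf where Lf: "\<And>d. Lf d \<ge> 0" "\<And>d. \<forall>k (\<theta>::nat\<Rightarrow>nat\<Rightarrow>real) P Q. k + d \<le> T \<longrightarrow>
     (\<forall>j\<in>{k..k+d}. \<forall>i\<in>{1..N}. 0 \<le> \<theta> j i \<and> \<theta> j i \<le> 1) \<longrightarrow>
     psd_mat n P \<longrightarrow> psd_mat n Q \<longrightarrow> l1 P \<le> \<beta> \<longrightarrow> l1 Q \<le> \<beta> \<longrightarrow>
     \<bar>relaxed_cost A W N R \<theta> d k P - relaxed_cost A W N R \<theta> d k Q\<bar> \<le> Lf d * l1 (P - Q)"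
    by metis
  define K where "K = 1 + real n * real n * (\<Sum>d\<le>T. Lf d)"
  have S0: "(\<Sum>d\<le>T. Lf d) \<ge> 0" using Lf(1) by (intro sum_nonneg) auto
  show ?thesis
  proof (intro exI[of _ K] conjI allI impI)
    show "K > 0" unfolding K_def using S0 by (simp add: add_pos_nonneg)
    fix t P Q assume t: "t \<le> T" and P: "psd_mat n P" and Q: "psd_mat n Q"
      and fP: "frob_norm P \<le> B" and fQ: "frob_norm Q \<le> B"
    define d where "d = T - t"
    have td: "t + d = T" unfolding d_def using t by simp
    have Pc: "P \<in> carrier_mat n n" and Qc: "Q \<in> carrier_mat n n" using P Q psd_carrier by auto
    have lP: "l1 P \<le> \<beta>" unfolding \<beta>_def
      using order.trans[OF frob_l1[OF Pc] mult_left_mono[OF fP]] by simp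
    have lQ: "l1 Q \<le> \<beta>" unfolding \<beta>_def
      using order.trans[OF frob_l1[OF Qc] mult_left_mono[OF fQ]] by simp
    define S where "S = relaxed_schedules N t T"
    have good: "\<forall>j\<in>{t..t+d}. \<forall>i\<in>{1..N}. 0 \<le> \<theta> j i \<and> \<theta> j i \<le> 1" if "\<theta> \<in> S" for \<theta>
      using that td unfolding S_def relaxed_schedules_def by auto
    have Sne: "S \<noteq> {}"
    proof -
      have "(\<lambda>k i. if i = 1 then 1 else 0 :: real) \<in> S"
        unfolding S_def relaxed_schedules_def using N_pos by auto
      then show ?thesis by auto
    qed
    have M: "\<forall>\<theta>\<in>S. \<bar>relaxed_cost A W N R \<theta> d t P - relaxed_cost A W N R \<theta> d t Q\<bar> \<le> Lf d * l1 (P - Q)"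
      using Lf(2)[of d] td good P Q lP lQ by auto
    have nnP: "\<forall>\<theta>\<in>S. relaxed_cost A W N R \<theta> d t P \<ge> 0"
      using cost_nonneg[OF Rw Ak Wp, of d] td good P by auto
    have nnQ: "\<forall>\<theta>\<in>S. relaxed_cost A W N R \<theta> d t Q \<ge> 0"
      using cost_nonneg[OF Rw Ak Wp, of d] td good Q by auto
    have "\<bar>U_relaxed A W N R T t P - U_relaxed A W N R T t Q\<bar> \<le> Lf d * l1 (P - Q)"
      unfolding U_relaxed_def d_def[symmetric] S_def[symmetric]
      by (rule inf_lip[OF Sne nnP nnQ M])
    also have "\<dots> \<le> Lf d * (real n * real n * frob_norm (P - Q))"
      by (rule mult_left_mono[OF frob_l1 Lf(1)]) (use Qc in \<open>simp add: minus_carrier_mat\<close>)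
    also have "\<dots> \<le> K * frob_norm (P - Q)"
    proof -
      have f0: "frob_norm (P - Q) \<ge> 0" unfolding frob_norm_def by (intro real_sqrt_ge_zero sum_nonneg) auto
      have "Lf d \<le> (\<Sum>d\<le>T. Lf d)"
        by (rule member_le_sum[where f=Lf]) (use Lf(1) d_def in auto)
      then have "Lf d * (real n * real n) \<le> K"
      proof -
        have "Lf d * (real n * real n) \<le> (\<Sum>d\<le>T. Lf d) * (real n * real n)"
          by (rule mult_right_mono[OF \<open>Lf d \<le> (\<Sum>d\<le>T. Lf d)\<close>]) simp
        then show ?thesis using S0 by (simp add: K_def algebra_simps)
      qed
      then have "Lf d * (real n * real n) * frob_norm (P - Q) \<le> K * frob_norm (P - Q)"
        using f0 by (rule mult_right_mono)
      then show ?thesis by (simp add: algebra_simps)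
    qed
    finally show "\<bar>U_relaxed A W N R T t P - U_relaxed A W N R T t Q\<bar> \<le> K * frob_norm (P - Q)" .
  qed
qed

theorem proposition4:
  fixes n N T :: nat
    and m :: "nat \<Rightarrow> nat"
    and A :: "nat \<Rightarrow> real mat"
    and W :: "real mat"
    and C :: "nat \<Rightarrow> nat \<Rightarrow> real mat"
    and V :: "nat \<Rightarrow> real mat"
    and B :: real
  assumes N_pos: "N \<ge> 1"
    and A_dim: "\<forall>k\<le>T. A k \<in> carrier_mat n n"
    and W_pd: "pd_mat n W"
    and C_dim: "\<forall>i\<in>{1..N}. \<forall>k\<le>T. C i k \<in> carrier_mat (m i) n"
    and V_pd: "\<forall>i\<in>{1..N}. pd_mat (m i) (V i)"
    and B_pos: "B > 0"
  shows "\<exists>K>0. \<forall>t\<le>T. \<forall>P Q. psd_mat n P \<longrightarrow> psd_mat n Q \<longrightarrow>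
           frob_norm P \<le> B \<longrightarrow> frob_norm Q \<le> B \<longrightarrow>
           \<bar>U_relaxed A W N (\<lambda>i k. info_mat (C i k) (V i)) T t P
            - U_relaxed A W N (\<lambda>i k. info_mat (C i k) (V i)) T t Q\<bar>
             \<le> K * frob_norm (P - Q)"
proof -
  have Rpsd: "\<forall>k\<le>T. \<forall>i\<in>{1..N}. psd_mat n (info_mat (C i k) (V i))"
  proof (intro allI impI ballI)
    fix k i assume k: "k \<le> T" and i: "i \<in> {1..N}"
    have "C i k \<in> carrier_mat (m i) n" using C_dim k i by auto
    moreover have "pd_mat (m i) (V i)" using V_pd i by auto
    ultimately show "psd_mat n (info_mat (C i k) (V i))" by (rule info_psd)
  qed
  show ?thesis by (rule main_generic[OF N_pos A_dim W_pd Rpsd B_pos])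
qed

end
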